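(* Let $n\ge2$ and let $\mathrm{Alt}(n)$ act naturally on $X=\{1,\ldots,n\}$; this action is sharply $(n-2)$-transitive. Then this $\mathrm{Alt}(n)$-set can be sequenced if and only if $n$ is even. Moreover, when $n$ is even, every enumeration of $X$ is a sequencing.
   Context: $\mathrm{Alt}(n)$ is the group of even permutations of $\{1,\ldots,n\}$. For a group $G$ acting sharply $k$-transitively on an $n$-element set $X$ (for any two ordered $k$-tuples of distinct elements there is exactly one $g\in G$ mapping the first to the second coordinatewise), a sequencing of $X$ is an enumeration $(x_1,\ldots,x_n)$ of all elements of $X$ such that the $n-k$ tuples $(x_1,\ldots,x_{k+1}),(x_2,\ldots,x_{k+2}),\ldots,(x_{n-k},\ldots,x_n)$ lie in pairwise distinct orbits of $G$ acting coordinatewise on ordered $(k+1)$-tuples of distinct elements of $X$. Here $k=n-2$. *)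

theory Defs
  imports "HOL-Combinatorics.Permutations"
begin

definition Alt :: "nat \<Rightarrow> (nat \<Rightarrow> nat) set" where
  "Alt n = {p. p permutes {1..n} \<and> evenperm p}"

definition sharply_transitive :: "('a \<Rightarrow> 'a) set \<Rightarrow> 'a set \<Rightarrow> nat \<Rightarrow> bool" where
  "sharply_transitive G X k \<longleftrightarrow>
     (\<forall>xs ys. distinct xs \<and> distinct ys \<and> length xs = k \<and> length ys = k
        \<and> set xs \<subseteq> X \<and> set ys \<subseteq> X \<longrightarrow> (\<exists>!g. g \<in> G \<and> map g xs = ys))"

definition same_orbit :: "('a \<Rightarrow> 'a) set \<Rightarrow> 'a list \<Rightarrow> 'a list \<Rightarrow> bool" where
  "same_orbit G xs ys \<longleftrightarrow> (\<exists>g\<in>G. map g xs = ys)"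

definition is_sequencing :: "('a \<Rightarrow> 'a) set \<Rightarrow> 'a set \<Rightarrow> nat \<Rightarrow> 'a list \<Rightarrow> bool" where
  "is_sequencing G X k xs \<longleftrightarrow>
     distinct xs \<and> set xs = X \<and>
     (\<forall>i < length xs - k. \<forall>j < length xs - k. i \<noteq> j \<longrightarrow>
        \<not> same_orbit G (take (k+1) (drop i xs)) (take (k+1) (drop j xs)))"

end

theory Submission
  imports Defs "HOL-Combinatorics.Cycles"
begin

lemma exists_perm_lists:
  assumes "distinct as" "distinct bs" "length as = length bs" "set as = S" "set bs = S"
  shows "\<exists>p. p permutes S \<and> (\<forall>i<length as. p (as!i) = bs!i)"
proof -
  let ?m = "length as"
  have f: "bij_betw ((!) as) {..<?m} S" using bij_betw_nth assms by blast
  have g: "bij_betw ((!) bs) {..<?m} S" using bij_betw_nth assms by metis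
  define p where "p = (\<lambda>x. if x \<in> S then bs ! (inv_into {..<?m} ((!) as) x) else x)"
  have "bij_betw (((!) bs) \<circ> inv_into {..<?m} ((!) as)) S S"
    using bij_betw_trans[OF bij_betw_inv_into[OF f] g] .
  then have "bij_betw p S S"
    by (rule bij_betw_cong[THEN iffD1, rotated]) (simp add: p_def)
  then have "p permutes S" by (rule bij_imp_permutes) (simp add: p_def)
  moreover have "\<forall>i<?m. p (as!i) = bs!i"
  proof (intro allI impI)
    fix i assume i: "i < ?m"
    then have "as ! i \<in> S" using assms by auto
    moreover have "inv_into {..<?m} ((!) as) (as ! i) = i"
      using f i by (simp add: bij_betw_def inv_into_f_f)
    ultimately show "p (as!i) = bs!i" by (simp add: p_def)
  qed
  ultimately show ?thesis by blast
qed

lemma agree_perm: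
  assumes "p permutes S" "q permutes S" "\<forall>x\<in>S-T. p x = q x"
  shows "(inv q \<circ> p) permutes T" "q \<circ> (inv q \<circ> p) = p"
proof -
  have r: "(inv q \<circ> p) permutes S" using assms permutes_compose permutes_inv by blast
  show "(inv q \<circ> p) permutes T"
    using r by (rule permutes_superset) (use assms in \<open>auto simp: permutes_inverses\<close>)
  show "q \<circ> (inv q \<circ> p) = p"
    using assms(2) by (simp add: o_assoc permutes_inv_o)
qed

lemma evenperm_cycle:
  "distinct cs \<Longrightarrow> cs \<noteq> [] \<Longrightarrow> evenperm (cycle_of_list cs) \<longleftrightarrow> even (length cs - 1)"
proof (induction cs rule: cycle_of_list.induct)
  case (1 i j cs)
  have "evenperm (cycle_of_list (i # j # cs)) \<longleftrightarrow> (evenperm (transpose i j) = evenperm (cycle_of_list (j # cs)))"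
    by (simp add: evenperm_comp permutation_swap_id permutation_of_cycle)
  also have "\<dots> \<longleftrightarrow> \<not> even (length cs)" using 1 by (simp add: evenperm_swap)
  finally have A: "evenperm (cycle_of_list (i # j # cs)) \<longleftrightarrow> \<not> even (length cs)" .
  moreover have "even (length (i#j#cs) - 1) \<longleftrightarrow> \<not> even (length cs)" by simp
  ultimately show ?case by (simp only:)
qed auto

lemma unique1:
  assumes "g permutes {1..n}" "h permutes {1..(n::nat)}" "distinct ws" "length ws = n - 1"
    "set ws \<subseteq> {1..n}" "map g ws = map h ws" "n \<ge> 1"
  shows "g = h"
proof -
  have "card ({1..n} - set ws) = 1"
    using assms by (simp add: card_Diff_subset distinct_card)
  then obtain a where a: "{1..n} - set ws = {a}" by (meson card_1_singletonE)
  have "\<forall>x\<in>{1..n} - ({1..n} - set ws). g x = h x" using assms(6) by (auto simp: map_eq_conv)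
  from agree_perm[OF assms(1,2) this] a
  have "(inv h \<circ> g) permutes {a}" "h \<circ> (inv h \<circ> g) = g" by auto
  then show ?thesis by simp
qed

lemma sharp:
  assumes "n \<ge> 2"
  shows "sharply_transitive (Alt n) {1..n} (n - 2)"
  unfolding sharply_transitive_def
proof (intro allI impI)
  fix xs ys :: "nat list"
  assume H: "distinct xs \<and> distinct ys \<and> length xs = n - 2 \<and> length ys = n - 2
        \<and> set xs \<subseteq> {1..n} \<and> set ys \<subseteq> {1..n}"
  have "card ({1..n} - set xs) = 2"
    using H assms by (simp add: card_Diff_subset distinct_card)
  then obtain a1 a2 where A: "a1 \<noteq> a2" "{1..n} - set xs = {a1, a2}" by (meson card_2_iff)
  have "card ({1..n} - set ys) = 2"
    using H assms by (simp add: card_Diff_subset distinct_card)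
  then obtain b1 b2 where B: "b1 \<noteq> b2" "{1..n} - set ys = {b1, b2}" by (meson card_2_iff)
  define as where "as = xs @ [a1, a2]"
  define bs where "bs = ys @ [b1, b2]"
  have "a1 \<notin> set xs" "a2 \<notin> set xs" "a1 \<in> {1..n}" "a2 \<in> {1..n}" using A(2) by blast+
  then have das: "distinct as" "set as = {1..n}" using A H unfolding as_def by auto
  have "b1 \<notin> set ys" "b2 \<notin> set ys" "b1 \<in> {1..n}" "b2 \<in> {1..n}" using B(2) by blast+
  then have dbs: "distinct bs" "set bs = {1..n}" using B H unfolding bs_def by auto
  obtain p where p: "p permutes {1..n}" "\<forall>i<length as. p (as!i) = bs!i"
    using exists_perm_lists[OF das(1) dbs(1) _ das(2) dbs(2)] H
    unfolding as_def bs_def by auto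
  have mp: "map p xs = ys"
  proof (rule nth_equalityI)
    show "length (map p xs) = length ys" using H by simp
    fix i assume "i < length (map p xs)"
    then have i: "i < length xs" by simp
    then have "p (as!i) = bs!i" using p(2) unfolding as_def by simp
    then show "map p xs ! i = ys ! i" using i H unfolding as_def bs_def by (simp add: nth_append)
  qed
  have perm_p: "permutation p" using p(1) permutes_imp_permutation by blast
  have b12: "b1 \<in> {1..n}" "b2 \<in> {1..n}" "b1 \<notin> set ys" "b2 \<notin> set ys" using B by auto
  define q where "q = (if evenperm p then p else transpose b1 b2 \<circ> p)"
  have q1: "q permutes {1..n}"
    unfolding q_def using p(1) permutes_compose[OF p(1) permutes_swap_id[OF b12(1,2)]] by simp
  have q2: "evenperm q"
    unfolding q_def using evenperm_comp[OF permutation_swap_id perm_p, of b1 b2] B(1)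
    by (simp add: evenperm_swap)
  have q3: "map q xs = ys"
  proof (cases "evenperm p")
    case True then show ?thesis using mp by (simp add: q_def)
  next
    case False
    have "map (transpose b1 b2) ys = ys"
      using b12(3,4) by (intro map_idI) (auto simp: transpose_def)
    then show ?thesis using mp False by (simp add: q_def flip: map_map)
  qed
  show "\<exists>!g. g \<in> Alt n \<and> map g xs = ys"
  proof (rule ex1I[of _ q])
    show "q \<in> Alt n \<and> map q xs = ys" using q1 q2 q3 by (simp add: Alt_def)
  next
    fix g assume g: "g \<in> Alt n \<and> map g xs = ys"
    have gp: "g permutes {1..n}" "evenperm g" using g by (auto simp: Alt_def)
    have "\<forall>x\<in>{1..n} - ({1..n} - set xs). g x = q x" using g q3 by (auto simp: map_eq_conv)
    from agree_perm[OF gp(1) q1 this] A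
    have r: "(inv q \<circ> g) permutes {a1, a2}" "q \<circ> (inv q \<circ> g) = g" by auto
    have "permutation g" "permutation (inv q)"
      using gp(1) q1 permutes_imp_permutation permutes_inv by blast+
    then have "evenperm (inv q \<circ> g)"
      using evenperm_comp evenperm_inv gp(2) q2 q1 permutes_imp_permutation
      by (metis finite_atLeastAtMost)
    with r(1) A(1) have "inv q \<circ> g = id"
      by (auto simp: permutes_doubleton_iff evenperm_swap)
    with r(2) show "g = q" by simp
  qed
qed


lemma windows:
  assumes "n \<ge> 2" "distinct xs" "set xs = {1..n}"
  shows "same_orbit (Alt n) (take (n-1) xs) (take (n-1) (drop 1 xs)) \<longleftrightarrow> odd n"
    and "same_orbit (Alt n) (take (n-1) (drop 1 xs)) (take (n-1) xs) \<longleftrightarrow> odd n"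
proof -
  have len: "length xs = n" using assms distinct_card by fastforce
  then obtain x0 rest where xs: "xs = x0 # rest" using assms by (cases xs) auto
  have lr: "length rest = n - 1" using len xs by simp
  define c where "c = cycle_of_list xs"
  have cp: "c permutes {1..n}" unfolding c_def using cycle_permutes assms(3) by metis
  have ce: "evenperm c \<longleftrightarrow> odd n" unfolding c_def using evenperm_cycle[OF assms(2)] xs len assms(1)
    by auto
  have "map c xs = rotate1 xs" using cyclic_rotation[of xs 1] assms(2) unfolding c_def by simp
  then have "take (n-1) (map c xs) = take (n-1) (rest @ [x0])" using xs by simp
  then have mc: "map c (take (n-1) xs) = rest"
    using lr by (simp add: take_map)
  have w1: "take (n-1) (drop 1 xs) = rest" using xs lr by simp
  have mi: "map (inv c) rest = take (n-1) xs"
    using mc[symmetric] cp by (simp add: permutes_inv_o)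
  have icp: "inv c permutes {1..n}" using cp by (rule permutes_inv)
  have ice: "evenperm (inv c) = evenperm c"
    using evenperm_inv cp permutes_imp_permutation by blast
  have dw0: "distinct (take (n-1) xs)" "length (take (n-1) xs) = n - 1" "set (take (n-1) xs) \<subseteq> {1..n}"
    using assms len by (auto dest: in_set_takeD)
  have dw1: "distinct rest" "length rest = n - 1" "set rest \<subseteq> {1..n}"
    using assms xs lr by auto
  show "same_orbit (Alt n) (take (n-1) xs) (take (n-1) (drop 1 xs)) \<longleftrightarrow> odd n"
  proof
    assume "same_orbit (Alt n) (take (n-1) xs) (take (n-1) (drop 1 xs))"
    then obtain g where g: "g permutes {1..n}" "evenperm g" "map g (take (n-1) xs) = rest"
      unfolding same_orbit_def Alt_def w1 by auto
    have "map g (take (n-1) xs) = map c (take (n-1) xs)" using g(3) mc by simp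
    then have "g = c" using unique1[OF g(1) cp dw0] assms(1) by simp
    then show "odd n" using g(2) ce by simp
  next
    assume "odd n"
    then show "same_orbit (Alt n) (take (n-1) xs) (take (n-1) (drop 1 xs))"
      unfolding same_orbit_def Alt_def w1 using cp ce mc by auto
  qed
  show "same_orbit (Alt n) (take (n-1) (drop 1 xs)) (take (n-1) xs) \<longleftrightarrow> odd n"
  proof
    assume "same_orbit (Alt n) (take (n-1) (drop 1 xs)) (take (n-1) xs)"
    then obtain g where g: "g permutes {1..n}" "evenperm g" "map g rest = take (n-1) xs"
      unfolding same_orbit_def Alt_def w1 by auto
    have "map g rest = map (inv c) rest" using g(3) mi by simp
    then have "g = inv c" using unique1[OF g(1) icp dw1] assms(1) by simp
    then show "odd n" using g(2) ce ice by simp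
  next
    assume "odd n"
    then show "same_orbit (Alt n) (take (n-1) (drop 1 xs)) (take (n-1) xs)"
      unfolding same_orbit_def Alt_def w1 using icp ce ice mi by auto
  qed
qed

lemma two_idx: "(\<forall>i<(2::nat). \<forall>j<2. i \<noteq> j \<longrightarrow> P i j) \<longleftrightarrow> P 0 1 \<and> P 1 0"
  by (auto simp: less_Suc_eq numeral_2_eq_2)

lemma seq_iff:
  assumes "n \<ge> 2"
  shows "is_sequencing (Alt n) {1..n} (n - 2) xs \<longleftrightarrow> distinct xs \<and> set xs = {1..n} \<and> even n"
proof (cases "distinct xs \<and> set xs = {1..n}")
  case True
  have len: "length xs = n" using True distinct_card by fastforce
  have e1: "n - 2 + 1 = n - 1" "length xs - (n - 2) = 2" using assms len by auto
  show ?thesis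
    unfolding is_sequencing_def e1 two_idx using True windows[OF assms, of xs] by simp
qed (auto simp: is_sequencing_def)

theorem theorem4p1:
  fixes n :: nat
  assumes "n \<ge> 2"
  shows "sharply_transitive (Alt n) {1..n} (n - 2)
    \<and> ((\<exists>xs. is_sequencing (Alt n) {1..n} (n - 2) xs) \<longleftrightarrow> even n)
    \<and> (even n \<longrightarrow> (\<forall>xs. distinct xs \<and> set xs = {1..n} \<longrightarrow> is_sequencing (Alt n) {1..n} (n - 2) xs))"
proof -
  have "distinct [1..<n+1] \<and> set [1..<n+1] = {1..n}" by auto
  then show ?thesis using sharp[OF assms] seq_iff[OF assms] by blast
qed

end
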